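(* Let $k\ge 4$, $n=2k-1$, $\lambda\in\overline{\mathcal{U}}_{T_n}$, and let $Y=\mathrm{KN}(S_\lambda)$. Write the elements of $S_\lambda$ increasingly as $0=s_0<s_1<\cdots$ and let $z$ be the index with $s_z=n-2$. Then: (1) the cell in row $z+1$ and column $z+1$ does not belong to $Y$; (2) column $z+1$ of $Y$ contains exactly $z$ cells; (3) the main diagonal of $Y$ contains exactly $z$ cells.
   Context: A partition of $N$ into distinct parts is a sequence $\lambda=(\lambda_1<\dots<\lambda_t)$ of positive integers with sum $N$ and $t\ge 2$, identified with its set of parts. Missing parts: $\mathcal{M}_\lambda=\{1,\dots,\lambda_t\}\setminus\lambda$. $\lambda$ is refinable if two distinct missing parts sum to a part of $\lambda$, unrefinable otherwise; $\mathcal{U}_N$ is the set of unrefinable partitions of $N$. An element of $\mathcal{U}_N$ is maximal if its largest part is the maximum of the largest parts of elements of $\mathcal{U}_N$; $\widetilde{\mathcal{U}}_N$ is the set of these and $\overline{\mathcal{U}}_N=\{\lambda\in\widetilde{\mathcal{U}}_N:\#\mathcal{M}_\lambda=\lfloor\lambda_t/2\rfloor\}$. $T_n=n(n+1)/2$. For $\lambda\in\overline{\mathcal{U}}_{T_n}$ (with $n=2k-1$, $k\ge 4$) one knows $\lambda_t=2n-4$, $t=n-2$ and $n-2\notin\lambda$. $S_\lambda=\mathbb{N}_0\setminus\lambda$. The Keith–Nath transformation sends a set $S\subseteq\mathbb{N}_0$ with $0\in S$ and finite complement to the Young diagram $\mathrm{KN}(S)$ whose boundary is the lattice path that, starting at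 the origin, takes for $j=0,1,\dots,\max(\mathbb{N}_0\setminus S)$ an east step if $j\in S$ and a north step otherwise. Diagrams are in English convention (rows numbered from the top, columns from the left); the main diagonal consists of the cells in row $i$, column $i$. *)

theory Defs
  imports Main "HOL-Library.Infinite_Set"
begin

text \<open>Partitions into distinct parts are identified with their (finite) sets of parts.\<close>

definition distinct_partition :: "nat \<Rightarrow> nat set \<Rightarrow> bool" where
  "distinct_partition N lam \<longleftrightarrow>
     finite lam \<and> 0 \<notin> lam \<and> \<Sum>lam = N \<and> card lam \<ge> 2"

definition missing_parts :: "nat set \<Rightarrow> nat set" where
  "missing_parts lam = {1..Max lam} - lam"

definition refinable :: "nat set \<Rightarrow> bool" where
  "refinable lam \<longleftrightarrow>
     (\<exists>a\<in>missing_parts lam. \<exists>b\<in>missing_parts lam. a \<noteq> b \<and> a + b \<in> lam)"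

definition unrefinable_parts :: "nat \<Rightarrow> nat set set" where
  "unrefinable_parts N = {lam. distinct_partition N lam \<and> \<not> refinable lam}"

definition maximal_unrefinable :: "nat \<Rightarrow> nat set set" where
  "maximal_unrefinable N =
     {lam \<in> unrefinable_parts N. \<forall>mu \<in> unrefinable_parts N. Max mu \<le> Max lam}"

definition Ubar :: "nat \<Rightarrow> nat set set" where
  "Ubar N = {lam \<in> maximal_unrefinable N. card (missing_parts lam) = Max lam div 2}"

definition T :: "nat \<Rightarrow> nat" where
  "T n = n * (n + 1) div 2"

text \<open>Keith--Nath diagram of S (0 in S, finite complement). The lattice path takes, for
  j = 0,1,..., an east step if j \<in> S and a north step otherwise. The north step for the
  gap g is at x-coordinate card {s\<in>S. s<g}. In English convention row i (from the top)
  corresponds to the i-th largest gap, and consists of the cells in columns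
  1..card {s\<in>S. s < g_i}. Cells are pairs (row, column), 1-indexed.\<close>
definition KN :: "nat set \<Rightarrow> (nat \<times> nat) set" where
  "KN S = {(i, j). 1 \<le> i \<and> i \<le> card (- S) \<and> 1 \<le> j \<and>
       j \<le> card {s \<in> S. s < rev (sorted_list_of_set (- S)) ! (i - 1)}}"

end

theory Submission
  imports Defs
begin


lemma T2: "2 * T n = n * (n + 1)"
  unfolding T_def by simp

lemma gauss1: "2 * (\<Sum>a\<in>{1..r}. a) = r * (r + 1::nat)"
  by (induction r) (auto simp: algebra_simps)

lemma witness:
  fixes n :: nat
  assumes n7: "n \<ge> 7"
  defines "W \<equiv> {1..<n-2} \<union> {n+1, 2*n-4}"
  shows "W \<in> unrefinable_parts (T n)" and "Max W = 2*n-4"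
proof -
  define r where "r = n - 2"
  have r5: "r \<ge> 5" and nr: "n = r + 2" using n7 unfolding r_def by auto
  have W: "W = {1..<r} \<union> {r+3, 2*r}" unfolding W_def r_def using n7
    by (auto simp: numeral_eq_Suc)
  have fin: "finite W" unfolding W by simp
  have mx: "Max W = 2*r"
    unfolding W using r5 by (intro Max_eqI) auto
  thus "Max W = 2*n-4" unfolding nr by simp
  have s1: "2 * (\<Sum>a\<in>{1..<r}. a) = r * (r - 1)"
  proof -
    obtain q where q: "r = Suc q" using r5 by (cases r) auto
    have "{1..<r} = {1..q}" unfolding q by auto
    thus ?thesis using gauss1[of q] q by simp
  qed
  have sW: "\<Sum>W = (\<Sum>a\<in>{1..<r}. a) + (r + 3) + 2 * r"
    unfolding W using r5 by (simp add: sum.union_disjoint)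
  have "2 * \<Sum>W = 2 * T n"
    unfolding T2 sW using s1 nr r5
    by (simp add: algebra_simps)
  hence sumW: "\<Sum>W = T n" by simp
  have card2: "card W \<ge> 2"
  proof -
    have "{r+3, 2*r} \<subseteq> W" unfolding W by auto
    hence "card {r+3, 2*r} \<le> card W" using fin card_mono by blast
    thus ?thesis using r5 by simp
  qed
  have dp: "distinct_partition (T n) W"
    unfolding distinct_partition_def using fin sumW card2 r5 unfolding W by auto
  have nr: "\<not> refinable W"
  proof
    assume "refinable W"
    then obtain a b where ab: "a \<in> missing_parts W" "b \<in> missing_parts W" "a \<noteq> b" "a + b \<in> W"
      unfolding refinable_def by blast
    have "a \<ge> r" "b \<ge> r" using ab(1,2) unfolding missing_parts_def W by auto
    moreover have "a + b \<le> 2 * r" using ab(4) r5 unfolding W by auto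
    ultimately have "a = r" "b = r" using r5 by auto
    thus False using ab(3) by simp
  qed
  show "W \<in> unrefinable_parts (T n)" unfolding unrefinable_parts_def using dp nr by simp
qed

lemma card_Ubar:
  fixes n :: nat and lam :: "nat set"
  assumes n7: "n \<ge> 7" and U: "lam \<in> Ubar (T n)"
  shows "card lam = n - 2"
proof -
  have dp: "distinct_partition (T n) lam" and nref: "\<not> refinable lam"
    and maxl: "\<forall>mu\<in>unrefinable_parts (T n). Max mu \<le> Max lam"
    and cm: "card (missing_parts lam) = Max lam div 2"
    using U unfolding Ubar_def maximal_unrefinable_def unrefinable_parts_def by auto
  have fin: "finite lam" and z0: "0 \<notin> lam" and sl: "\<Sum>lam = T n" and c2: "card lam \<ge> 2"
    using dp unfolding distinct_partition_def by auto
  define m where "m = Max lam"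
  have ne: "lam \<noteq> {}" using c2 by auto
  have mlam: "m \<in> lam" unfolding m_def using fin ne by simp
  have m1: "m \<ge> 1" using mlam z0 by (cases m) auto
  have sub: "lam \<subseteq> {1..m}" unfolding m_def using fin z0
    by (auto simp: Suc_le_eq intro: Max_ge) (metis not_gr0)
  have "card (missing_parts lam) = m - card lam"
    unfolding missing_parts_def m_def[symmetric] using sub fin by (simp add: card_Diff_subset)
  hence cl: "card lam = m - m div 2" using cm unfolding m_def[symmetric] using sub card_mono[of "{1..m}" lam] by simp
  have lower: "2 * n - 4 \<le> m" using maxl witness[OF n7] unfolding m_def by metis
  define r where "r = (m - 1) div 2"
  have pair: "a \<in> lam \<or> m - a \<in> lam" if "a \<in> {1..r}" for a
  proof (rule ccontr)
    assume "\<not> ?thesis"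
    hence "a \<in> missing_parts lam" "m - a \<in> missing_parts lam"
      using that unfolding missing_parts_def m_def[symmetric] r_def by auto
    moreover have "a \<noteq> m - a" "a + (m - a) \<in> lam" using that mlam unfolding r_def by auto
    ultimately show False using nref unfolding refinable_def by blast
  qed
  define g where "g a = (if a \<in> lam then a else m - a)" for a
  have gin1: "g a \<in> lam - {m}" if "a \<in> {1..r}" for a
    using pair[OF that] that unfolding g_def r_def by auto
  have gin: "g ` {1..r} \<subseteq> lam - {m}" unfolding image_subset_iff using gin1 by blast
  have ginj: "inj_on g {1..r}"
  proof
    fix a b assume ab: "a \<in> {1..r}" "b \<in> {1..r}" "g a = g b"
    thus "a = b" unfolding g_def r_def by (auto split: if_splits)
  qed
  have cardr: "card (lam - {m}) = r" using cl mlam fin unfolding r_def by simp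
  have gim: "g ` {1..r} = lam - {m}"
    using card_subset_eq[OF _ gin] fin ginj cardr by (simp add: card_image)
  have "\<Sum>lam = m + \<Sum>(lam - {m})" using fin mlam by (simp add: sum.remove)
  also have "\<Sum>(lam - {m}) = (\<Sum>a\<in>{1..r}. g a)" unfolding gim[symmetric]
    using ginj by (simp add: sum.reindex)
  also have "(\<Sum>a\<in>{1..r}. g a) = (\<Sum>a\<in>{1..r}. a) + (\<Sum>a\<in>{1..r}. if a \<in> lam then 0 else m - 2 * a)"
    unfolding sum.distrib[symmetric] by (rule sum.cong) (auto simp: g_def r_def)
  finally have key: "2 * T n = 2 * m + r * (r + 1) + 2 * (\<Sum>a\<in>{1..r}. if a \<in> lam then 0 else m - 2 * a)"
    (is "_ = _ + _ + 2 * ?E")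
    using sl gauss1[of r] by simp
  have nn: "n * (n + 1) = 2 * m + r * (r + 1) + 2 * ?E" using key T2 by simp
  have "m \<le> 2 * n - 4"
  proof (rule ccontr)
    assume "\<not> ?thesis"
    hence "m = 2*n-3 \<or> m = 2*n-2 \<or> m \<ge> 2*n-1" by auto
    moreover
    { assume mm: "m \<ge> 2*n-1"
      hence "r \<ge> n - 1" unfolding r_def by auto
      hence "r * (r+1) \<ge> (n-1) * n" using mult_le_mono n7 by (metis Suc_diff_1 Suc_eq_plus1 add_le_mono1 gr0I not_numeral_le_zero zero_le)
      hence "n * (n + 1) \<ge> 2 * (2*n-1) + (n-1) * n" using nn mm by linarith
      moreover have "(n-1)*n + n + n = n * (n+1)" using n7 by (cases n) (auto simp: algebra_simps)
      ultimately have False using n7 by linarith }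
    moreover
    { assume mm: "m = 2*n-3"
      hence rr: "r = n - 2" unfolding r_def using n7 by auto
      obtain q where q: "n = q + 7" using n7 by (metis add.commute le_Suc_ex)
      have E2: "?E = 2" using nn unfolding mm rr q by (simp add: algebra_simps)
      have False
      proof (cases "\<exists>a\<in>{1..<r}. a \<notin> lam")
        case True
        then obtain a where a: "a \<in> {1..<r}" "a \<notin> lam" by auto
        have "(if a \<in> lam then 0 else m - 2 * a) \<le> ?E"
          using a by (intro member_le_sum) auto
        moreover have "m - 2 * a \<ge> 3" using a mm rr by auto
        ultimately show False using a E2 by simp
      next
        case False
        hence "?E = (\<Sum>a\<in>{r}. if a \<in> lam then 0 else m - 2 * a)"
          using n7 rr by (intro sum.mono_neutral_right) auto
        hence "?E \<le> 1" using mm rr n7 by (simp, arith)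
        thus False using E2 by simp
      qed }
    moreover
    { assume mm: "m = 2*n-2"
      hence rr: "r = n - 2" unfolding r_def using n7 by auto
      obtain q where q: "n = q + 7" using n7 by (metis add.commute le_Suc_ex)
      have E1: "?E = 1" using nn unfolding mm rr q by (simp add: algebra_simps)
      have "2 dvd ?E" using mm by (intro dvd_sum) auto
      hence False using E1 by simp }
    ultimately show False by blast
  qed
  hence "m = 2 * n - 4" using lower by simp
  thus ?thesis using cl n7 by simp
qed



lemma enum_count:
  fixes S :: "nat set"
  assumes inf: "infinite S" and ez: "enumerate S z = x"
  shows "(Suc z \<le> card {s\<in>S. s < g}) \<longleftrightarrow> x < g"
proof
  assume h: "Suc z \<le> card {s\<in>S. s < g}"
  show "x < g"
  proof (rule ccontr)
    assume "\<not> x < g"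
    hence "{s\<in>S. s < g} \<subseteq> enumerate S ` {..<z}"
    proof (intro subsetI)
      fix s assume s: "s \<in> {s\<in>S. s < g}"
      then obtain j where j: "enumerate S j = s" using enumerate_Ex[OF inf] by blast
      have "enumerate S j < enumerate S z" using s j ez \<open>\<not> x < g\<close> by auto
      hence "j < z" using inf by simp
      thus "s \<in> enumerate S ` {..<z}" using j by auto
    qed
    hence "card {s\<in>S. s < g} \<le> card (enumerate S ` {..<z})" by (intro card_mono) auto
    also have "\<dots> \<le> z" using card_image_le[of "{..<z}" "enumerate S"] by simp
    finally show False using h by simp
  qed
next
  assume h: "x < g"
  have "enumerate S ` {..z} \<subseteq> {s\<in>S. s < g}"
  proof
    fix s assume "s \<in> enumerate S ` {..z}"
    then obtain j where "j \<le> z" "s = enumerate S j" by auto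
    moreover have "enumerate S j \<le> enumerate S z" using \<open>j \<le> z\<close> inf by simp
    ultimately show "s \<in> {s\<in>S. s < g}" using h ez enumerate_in_set[OF inf] by auto
  qed
  hence "card (enumerate S ` {..z}) \<le> card {s\<in>S. s < g}" by (intro card_mono) auto
  moreover have "inj_on (enumerate S) {..z}"
    using inj_enumerate[OF inf] by (rule inj_on_subset) simp
  hence "card (enumerate S ` {..z}) = Suc z" by (simp add: card_image)
  ultimately show "Suc z \<le> card {s\<in>S. s < g}" by simp
qed

lemma enum_card_below:
  fixes S :: "nat set"
  assumes inf: "infinite S" and ez: "enumerate S z = x"
  shows "card {s\<in>S. s < x} = z"
proof -
  have "{s\<in>S. s < x} = enumerate S ` {..<z}"
  proof
    show "{s\<in>S. s < x} \<subseteq> enumerate S ` {..<z}"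
    proof
      fix s assume s: "s \<in> {s\<in>S. s < x}"
      then obtain j where j: "enumerate S j = s" using enumerate_Ex[OF inf] by blast
      hence "j < z" using s ez inf by (metis enumerate_mono_iff mem_Collect_eq)
      thus "s \<in> enumerate S ` {..<z}" using j by auto
    qed
    show "enumerate S ` {..<z} \<subseteq> {s\<in>S. s < x}"
      using ez inf enumerate_in_set[OF inf] by auto
  qed
  moreover have "inj_on (enumerate S) {..<z}"
    using inj_enumerate[OF inf] by (rule inj_on_subset) simp
  ultimately show ?thesis by (simp add: card_image)
qed

lemma desc_char:
  assumes fin: "finite lam"
  defines "ys \<equiv> rev (sorted_list_of_set lam)"
  shows "(1 \<le> i \<and> i \<le> card lam \<and> x < ys ! (i - 1)) \<longleftrightarrow> (1 \<le> i \<and> i \<le> card {p\<in>lam. x < p})"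
proof -
  let ?t = "card lam"
  have len: "length ys = ?t" unfolding ys_def by simp
  have dist: "distinct ys" unfolding ys_def by simp
  have setys: "set ys = lam" unfolding ys_def using fin by simp
  have sw: "sorted_wrt (>) ys" unfolding ys_def sorted_wrt_rev
    using strict_sorted_list_of_set by (simp add: sorted_wrt_iff_nth_less)
  have dec: "ys ! b \<le> ys ! a" if "a \<le> b" "b < ?t" for a b
    using sorted_wrt_nth_less[OF sw, of a b] that len by (cases "a = b") auto
  define C where "C = {i. 1 \<le> i \<and> i \<le> ?t \<and> x < ys ! (i - 1)}"
  have bij: "bij_betw (\<lambda>i. ys ! (i - 1)) {1..?t} lam"
  proof -
    have b0: "bij_betw ((!) ys) {..<?t} lam" using bij_betw_nth[OF dist] len setys by simp
    have b1: "bij_betw (\<lambda>i. i - 1) {1..?t} {..<?t}"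
      by (rule bij_betw_byWitness[where f'="\<lambda>i. i + 1"]) auto
    show ?thesis using bij_betw_trans[OF b1 b0] by (simp add: comp_def)
  qed
  have cardC: "card C = card {p\<in>lam. x < p}"
  proof -
    have "C \<subseteq> {1..?t}" unfolding C_def by auto
    hence "inj_on (\<lambda>i. ys ! (i - 1)) C" by (rule inj_on_subset[OF bij_betw_imp_inj_on[OF bij]])
    moreover have "(\<lambda>i. ys ! (i - 1)) ` C = {p\<in>lam. x < p}"
    proof
      show "(\<lambda>i. ys ! (i - 1)) ` C \<subseteq> {p\<in>lam. x < p}"
        using bij unfolding C_def bij_betw_def by auto
      show "{p\<in>lam. x < p} \<subseteq> (\<lambda>i. ys ! (i - 1)) ` C"
      proof
        fix p assume p: "p \<in> {p\<in>lam. x < p}"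
        then obtain i where "i \<in> {1..?t}" "ys ! (i - 1) = p"
          using bij unfolding bij_betw_def by (metis (no_types, lifting) imageE mem_Collect_eq)
        thus "p \<in> (\<lambda>i. ys ! (i - 1)) ` C" using p unfolding C_def by auto
      qed
    qed
    ultimately show ?thesis by (metis card_image)
  qed
  have down: "j \<in> C" if "i \<in> C" "1 \<le> j" "j \<le> i" for i j
  proof -
    have "ys ! (i - 1) \<le> ys ! (j - 1)" using that dec[of "j - 1" "i - 1"] unfolding C_def by auto
    thus ?thesis using that unfolding C_def by auto
  qed
  have finC: "finite C" unfolding C_def by auto
  show ?thesis
  proof
    assume h: "1 \<le> i \<and> i \<le> ?t \<and> x < ys ! (i - 1)"
    hence "i \<in> C" unfolding C_def by auto
    hence "{1..i} \<subseteq> C" using down by auto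
    hence "card {1..i} \<le> card C" using finC card_mono by blast
    thus "1 \<le> i \<and> i \<le> card {p\<in>lam. x < p}" using h cardC by simp
  next
    assume h: "1 \<le> i \<and> i \<le> card {p\<in>lam. x < p}"
    have "C \<subseteq> {1..?t}" unfolding C_def by auto
    hence ct: "card C \<le> ?t" using card_mono[of "{1..?t}" C] by simp
    show "1 \<le> i \<and> i \<le> ?t \<and> x < ys ! (i - 1)"
    proof (rule ccontr)
      assume "\<not> ?thesis"
      hence "i \<notin> C" "i \<le> ?t" using h cardC ct unfolding C_def by auto
      hence iC: "i \<notin> C" by simp
      have "C \<subseteq> {1..<i}"
      proof
        fix j assume j: "j \<in> C"
        hence j1: "1 \<le> j" unfolding C_def by simp
        show "j \<in> {1..<i}"
        proof (rule ccontr)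
          assume "j \<notin> {1..<i}"
          hence "i \<le> j" using j1 by auto
          thus False using down[OF j, of i] h iC by simp
        qed
      qed
      hence "card C \<le> i - 1" using card_mono[of "{1..<i}" C] by simp
      thus False using h cardC by linarith
    qed
  qed
qed


theorem lemma3p5:
  fixes k n z :: nat and lam :: "nat set"
  assumes "k \<ge> 4" and "n = 2 * k - 1"
    and "lam \<in> Ubar (T n)"
    and "enumerate (- lam) z = n - 2"
  shows "(z + 1, z + 1) \<notin> KN (- lam)
       \<and> card {i. (i, z + 1) \<in> KN (- lam)} = z
       \<and> card {i. (i, i) \<in> KN (- lam)} = z"
proof -
  have n7: "n \<ge> 7" using assms(1,2) by simp
  have fin: "finite lam" using assms(3)
    unfolding Ubar_def maximal_unrefinable_def unrefinable_parts_def distinct_partition_def by auto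
  have t: "card lam = n - 2" using card_Ubar[OF n7 assms(3)] .
  define x where "x = n - 2"
  have inf: "infinite (- lam)"
    using fin by (metis Compl_eq_Diff_UNIV Diff_infinite_finite infinite_UNIV_nat)
  have ez: "enumerate (- lam) z = x" using assms(4) unfolding x_def .
  have xn: "x \<notin> lam" using enumerate_in_set[OF inf, of z] ez by simp
  have zc: "card {s\<in>- lam. s < x} = z" using enum_card_below[OF inf ez] .
  have u1: "{0..<x} = {s\<in>- lam. s < x} \<union> {p\<in>lam. p < x}" by auto
  have "card {0..<x} = card {s\<in>- lam. s < x} + card {p\<in>lam. p < x}"
    unfolding u1 by (rule card_Un_disjoint) auto
  hence e1: "x = z + card {p\<in>lam. p < x}" using zc by simp
  have u2: "lam = {p\<in>lam. p < x} \<union> {p\<in>lam. x < p}" using xn by auto (metis linorder_neqE_nat)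
  have "card ({p\<in>lam. p < x} \<union> {p\<in>lam. x < p}) = card {p\<in>lam. p < x} + card {p\<in>lam. x < p}"
    by (rule card_Un_disjoint) (use fin in auto)
  hence e2: "card lam = card {p\<in>lam. p < x} + card {p\<in>lam. x < p}" using u2 by simp
  have cz: "card {p\<in>lam. x < p} = z" using e1 e2 t unfolding x_def by simp
  define ys where "ys = rev (sorted_list_of_set lam)"
  define L where "L i = card {s \<in> - lam. s < ys ! (i - 1)}" for i
  have KN: "(i, j) \<in> KN (- lam) \<longleftrightarrow> 1 \<le> i \<and> i \<le> card lam \<and> 1 \<le> j \<and> j \<le> L i" for i j
    unfolding KN_def L_def ys_def by simp
  have ch: "(1 \<le> i \<and> i \<le> card lam \<and> Suc z \<le> L i) \<longleftrightarrow> (1 \<le> i \<and> i \<le> z)" for i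
    using desc_char[OF fin, of i x] enum_count[OF inf ez] cz unfolding L_def ys_def by simp
  have zt: "z \<le> card lam" using ch[of z] by (cases z) auto
  have col: "{i. (i, z + 1) \<in> KN (- lam)} = {1..z}" using ch KN by auto
  have diag: "{i. (i, i) \<in> KN (- lam)} = {1..z}"
  proof (intro set_eqI iffI)
    fix i assume "i \<in> {i. (i, i) \<in> KN (- lam)}"
    hence h: "1 \<le> i" "i \<le> card lam" "i \<le> L i" using KN by auto
    show "i \<in> {1..z}"
    proof (rule ccontr)
      assume "i \<notin> {1..z}"
      hence "\<not> Suc z \<le> L i" using ch[of i] h by auto
      thus False using h \<open>i \<notin> {1..z}\<close> by auto
    qed
  next
    fix i assume "i \<in> {1..z}"
    hence "1 \<le> i" "i \<le> card lam" "Suc z \<le> L i" using ch[of i] zt by auto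
    thus "i \<in> {i. (i, i) \<in> KN (- lam)}" using KN \<open>i \<in> {1..z}\<close> by auto
  qed
  have c1: "(z + 1, z + 1) \<notin> KN (- lam)"
  proof
    assume "(z + 1, z + 1) \<in> KN (- lam)"
    thus False using ch[of "z+1"] KN by auto
  qed
  show ?thesis using c1 col diag by simp
qed

end
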